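(* Let $L>0$, let $\bar c:[0,L]\to(0,\infty)$ and $a,d:[0,L]\to\mathbb{R}$ be continuous, and let $R_0,R_L\in\mathbb{R}$ with $R_0R_L\neq 0$. For $\delta\in\{1,a,d\}$ define $I_{\bar c/\delta}(x)=\int_0^x \frac{\delta(y)}{\bar c(y)}\,dy$, writing $I_{\bar c}=I_{\bar c/1}$. For $s\in\mathbb{C}$ consider the boundary value problem for $\hat W=(\hat w_1,\hat w_2)^T:[0,L]\to\mathbb{C}^2$: $$s\hat w_1-\bar c(x)\hat w_1'=a(x)\hat w_1,\qquad s\hat w_2+\bar c(x)\hat w_2'=d(x)\hat w_2,\qquad x\in[0,L],$$ $$\hat w_2(0)=R_0\,\hat w_1(0),\qquad \hat w_1(L)=R_L\,\hat w_2(L).$$ Then this problem has a nontrivial solution if and only if $s=s_n$ for some $n\in\mathbb{Z}$, where $$s_n=\frac{\ln(R_0R_L)+I_{\bar c/d}(L)+I_{\bar c/a}(L)+2\pi n i}{2\,I_{\bar c}(L)},$$ and $\ln(R_0R_L)$ denotes any fixed complex logarithm of the nonzero real number $R_0R_L$. *)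

theory Defs
  imports "HOL-Analysis.Analysis"
begin

definition Iint :: "(real \<Rightarrow> real) \<Rightarrow> (real \<Rightarrow> real) \<Rightarrow> real \<Rightarrow> real" where
  "Iint c \<delta> x = integral {0..x} (\<lambda>y. \<delta> y / c y)"

definition bvp_solution ::
  "real \<Rightarrow> (real \<Rightarrow> real) \<Rightarrow> (real \<Rightarrow> real) \<Rightarrow> (real \<Rightarrow> real) \<Rightarrow> real \<Rightarrow> real \<Rightarrow> complex
   \<Rightarrow> (real \<Rightarrow> complex) \<Rightarrow> (real \<Rightarrow> complex) \<Rightarrow> bool" where
  "bvp_solution L c a d R0 RL s w1 w2 \<longleftrightarrow>
     (\<exists>w1' w2'. (\<forall>x\<in>{0..L}.
        (w1 has_vector_derivative w1' x) (at x within {0..L}) \<and>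
        (w2 has_vector_derivative w2' x) (at x within {0..L}) \<and>
        s * w1 x - complex_of_real (c x) * w1' x = complex_of_real (a x) * w1 x \<and>
        s * w2 x + complex_of_real (c x) * w2' x = complex_of_real (d x) * w2 x))
     \<and> w2 0 = complex_of_real R0 * w1 0
     \<and> w1 L = complex_of_real RL * w2 L"

end

theory Submission
  imports Defs
begin

lemma vexp:
  assumes "(\<phi> has_vector_derivative k) (at x within S)"
  shows "((\<lambda>x. exp (\<phi> x :: complex)) has_vector_derivative k * exp (\<phi> x)) (at x within S)"
proof -
  have "(exp has_field_derivative exp (\<phi> x)) (at (\<phi> x) within \<phi> ` S)"
    by (rule has_field_derivative_at_within) (rule DERIV_exp)
  from field_vector_diff_chain_within[OF assms this] show ?thesis by (simp add: o_def)
qed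

lemma ode_unique:
  fixes w \<phi> k :: "real \<Rightarrow> complex"
  assumes "0 \<le> L"
    and w: "\<And>x. x \<in> {0..L} \<Longrightarrow> (w has_vector_derivative (k x * w x)) (at x within {0..L})"
    and p: "\<And>x. x \<in> {0..L} \<Longrightarrow> (\<phi> has_vector_derivative k x) (at x within {0..L})"
    and x: "x \<in> {0..L}"
  shows "w x = w 0 * exp (\<phi> x - \<phi> 0)"
proof -
  have d: "((\<lambda>x. w x * exp (- \<phi> x)) has_vector_derivative 0) (at x within {0..L})"
    if "x \<in> {0..L}" for x
  proof -
    have "((\<lambda>x. w x * exp (- \<phi> x)) has_vector_derivative
        (w x * (- k x * exp (- \<phi> x)) + k x * w x * exp (- \<phi> x))) (at x within {0..L})"
      by (intro has_vector_derivative_mult w that vexp has_vector_derivative_minus p)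
    then show ?thesis by (simp add: algebra_simps)
  qed
  obtain C where C: "\<And>x. x \<in> {0..L} \<Longrightarrow> w x * exp (- \<phi> x) = C"
    using has_vector_derivative_zero_constant[of "{0..L}" "\<lambda>x. w x * exp (- \<phi> x)"] d
    by (metis convex_real_interval(5))
  have "w x * exp (- \<phi> x) = w 0 * exp (- \<phi> 0)" using C[OF x] C[of 0] assms(1) by simp
  then have "w x = w 0 * exp (- \<phi> 0) * exp (\<phi> x)"
    by (metis exp_minus_inverse mult.assoc mult.right_neutral)
  then show ?thesis by (simp add: exp_diff exp_minus field_simps)
qed

lemma int_deriv:
  assumes "continuous_on {0..L} f" "x \<in> {0..L}"
  shows "((\<lambda>x. complex_of_real (integral {0..x} f)) has_vector_derivative complex_of_real (f x)) (at x within {0..L})"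
  using has_vector_derivative_of_real[OF integral_has_vector_derivative[OF assms, unfolded has_real_derivative_iff_has_vector_derivative[symmetric]]]
  by simp

theorem mainTheorem2:
  fixes L R0 RL :: real and c a d :: "real \<Rightarrow> real" and s l :: complex
  assumes "L > 0"
    and "continuous_on {0..L} c" and "\<forall>x\<in>{0..L}. c x > 0"
    and "continuous_on {0..L} a" and "continuous_on {0..L} d"
    and "R0 * RL \<noteq> 0"
    and "exp l = complex_of_real (R0 * RL)"
  shows "(\<exists>w1 w2. bvp_solution L c a d R0 RL s w1 w2 \<and> (\<exists>x\<in>{0..L}. w1 x \<noteq> 0 \<or> w2 x \<noteq> 0))
     \<longleftrightarrow> (\<exists>n::int. s = (l + complex_of_real (Iint c d L) + complex_of_real (Iint c a L)
                          + 2 * complex_of_real pi * of_int n * \<i>)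
                         / (2 * complex_of_real (Iint c (\<lambda>_. 1) L)))"
proof -
  define P where "P x = complex_of_real (Iint c (\<lambda>_. 1) x)" for x
  define A where "A x = complex_of_real (Iint c a x)" for x
  define D where "D x = complex_of_real (Iint c d x)" for x
  have cne: "c x \<noteq> 0" if "x \<in> {0..L}" for x using assms(3) that by (metis less_irrefl)
  have cont1: "continuous_on {0..L} (\<lambda>y. 1 / c y)"
    by (intro continuous_intros assms(2)) (use cne in auto)
  have conta: "continuous_on {0..L} (\<lambda>y. a y / c y)"
    by (intro continuous_intros assms(2,4)) (use cne in auto)
  have contd: "continuous_on {0..L} (\<lambda>y. d y / c y)"
    by (intro continuous_intros assms(2,5)) (use cne in auto)
  have dP: "(P has_vector_derivative complex_of_real (1 / c x)) (at x within {0..L})"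
    if "x \<in> {0..L}" for x
    unfolding P_def Iint_def using int_deriv[OF cont1 that] by simp
  have dA: "(A has_vector_derivative complex_of_real (a x / c x)) (at x within {0..L})"
    if "x \<in> {0..L}" for x
    unfolding A_def Iint_def using int_deriv[OF conta that] by simp
  have dD: "(D has_vector_derivative complex_of_real (d x / c x)) (at x within {0..L})"
    if "x \<in> {0..L}" for x
    unfolding D_def Iint_def using int_deriv[OF contd that] by simp
  have P0: "P 0 = 0" "A 0 = 0" "D 0 = 0" by (simp_all add: P_def A_def D_def Iint_def)
  have PLpos: "Iint c (\<lambda>_. 1) L > 0"
  proof -
    obtain x0 where x0: "x0 \<in> {0..L}" "\<And>y. y \<in> {0..L} \<Longrightarrow> c y \<le> c x0"
      using continuous_attains_sup[of "{0..L}" c] assms(1,2) by auto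
    have cx0: "c x0 > 0" using assms(3) x0 by auto
    have "integral {0..L} (\<lambda>y. 1 / c x0) \<le> integral {0..L} (\<lambda>y. 1 / c y)"
    proof (rule integral_le)
      show "(\<lambda>y. 1 / c y) integrable_on {0..L}" by (rule integrable_continuous_interval[OF cont1])
      fix y assume y: "y \<in> {0..L}"
      then have "0 < c y" "c y \<le> c x0" using x0 assms(3) by auto
      then show "1 / c x0 \<le> 1 / c y" by (simp add: frac_le)
    qed (rule integrable_continuous_interval[OF continuous_on_const])
    moreover have "integral {0..L} (\<lambda>y. 1 / c x0) = L / c x0" using assms(1) by simp
    moreover have "L / c x0 > 0" using assms(1) cx0 by simp
    ultimately show ?thesis unfolding Iint_def by linarith
  qed
  have PL: "P L \<noteq> 0" using PLpos by (simp add: P_def)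
  have L0: "0 \<in> {0..L}" "L \<in> {0..L}" using assms(1) by auto
  show ?thesis
  proof
    assume "\<exists>w1 w2. bvp_solution L c a d R0 RL s w1 w2 \<and> (\<exists>x\<in>{0..L}. w1 x \<noteq> 0 \<or> w2 x \<noteq> 0)"
    then obtain w1 w2 x1 where sol: "bvp_solution L c a d R0 RL s w1 w2"
      and x1: "x1 \<in> {0..L}" "w1 x1 \<noteq> 0 \<or> w2 x1 \<noteq> 0" by blast
    from sol obtain w1' w2' where
      DD: "\<forall>x\<in>{0..L}. (w1 has_vector_derivative w1' x) (at x within {0..L}) \<and>
        (w2 has_vector_derivative w2' x) (at x within {0..L}) \<and>
        s * w1 x - complex_of_real (c x) * w1' x = complex_of_real (a x) * w1 x \<and>
        s * w2 x + complex_of_real (c x) * w2' x = complex_of_real (d x) * w2 x"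
      and B0: "w2 0 = complex_of_real R0 * w1 0" and BL: "w1 L = complex_of_real RL * w2 L"
      unfolding bvp_solution_def by blast
    have D1: "\<And>x. x \<in> {0..L} \<Longrightarrow> (w1 has_vector_derivative w1' x) (at x within {0..L})"
      and D2: "\<And>x. x \<in> {0..L} \<Longrightarrow> (w2 has_vector_derivative w2' x) (at x within {0..L})"
      and E1: "\<And>x. x \<in> {0..L} \<Longrightarrow> s * w1 x - complex_of_real (c x) * w1' x = complex_of_real (a x) * w1 x"
      and E2: "\<And>x. x \<in> {0..L} \<Longrightarrow> s * w2 x + complex_of_real (c x) * w2' x = complex_of_real (d x) * w2 x"
      using DD by auto
    have D1': "(w1 has_vector_derivative ((s - a x) / c x) * w1 x) (at x within {0..L})"
      if "x \<in> {0..L}" for x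
    proof -
      have "w1' x = ((s - a x) / c x) * w1 x" using E1[OF that] cne[OF that]
        by (simp add: field_simps)
      then show ?thesis using D1[OF that] by simp
    qed
    have D2': "(w2 has_vector_derivative ((d x - s) / c x) * w2 x) (at x within {0..L})"
      if "x \<in> {0..L}" for x
    proof -
      have "w2' x = ((d x - s) / c x) * w2 x" using E2[OF that] cne[OF that]
        by (simp add: field_simps)
      then show ?thesis using D2[OF that] by simp
    qed
    have dphi1: "((\<lambda>x. s * P x - A x) has_vector_derivative ((s - a x) / c x)) (at x within {0..L})"
      if "x \<in> {0..L}" for x
    proof -
      have "((\<lambda>x. s * P x - A x) has_vector_derivative (s * complex_of_real (1 / c x) - complex_of_real (a x / c x))) (at x within {0..L})"
        by (intro derivative_intros dP dA that)
      then show ?thesis by (simp add: diff_divide_distrib)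
    qed
    have dphi2: "((\<lambda>x. D x - s * P x) has_vector_derivative ((d x - s) / c x)) (at x within {0..L})"
      if "x \<in> {0..L}" for x
    proof -
      have "((\<lambda>x. D x - s * P x) has_vector_derivative (complex_of_real (d x / c x) - s * complex_of_real (1 / c x))) (at x within {0..L})"
        by (intro derivative_intros dP dD that)
      then show ?thesis by (simp add: diff_divide_distrib)
    qed
    have W1: "w1 x = w1 0 * exp (s * P x - A x)" if "x \<in> {0..L}" for x
      using ode_unique[of L w1 "\<lambda>x. (s - a x) / c x" "\<lambda>x. s * P x - A x" x] D1' dphi1 that assms(1) P0
      by simp
    have W2: "w2 x = w2 0 * exp (D x - s * P x)" if "x \<in> {0..L}" for x
      using ode_unique[of L w2 "\<lambda>x. (d x - s) / c x" "\<lambda>x. D x - s * P x" x] D2' dphi2 that assms(1) P0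
      by simp
    have w10: "w1 0 \<noteq> 0"
      using x1 W1[OF x1(1)] W2[OF x1(1)] B0 by auto
    have "w1 0 * exp (s * P L - A L) = RL * (R0 * w1 0 * exp (D L - s * P L))"
      using BL W1[OF L0(2)] W2[OF L0(2)] B0 by simp
    then have "exp (s * P L - A L) = exp l * exp (D L - s * P L)"
      using w10 assms(7) by (simp add: field_simps)
    then have "exp (s * P L - A L) = exp (l + D L - s * P L)"
      by (simp add: exp_add exp_diff)
    then obtain n :: int where n: "s * P L - A L = l + D L - s * P L + of_int (2 * n) * pi * \<i>"
      using exp_eq by blast
    have "s = (l + D L + A L + 2 * complex_of_real pi * of_int n * \<i>) / (2 * P L)"
      using n PL by (simp add: field_simps)
    then show "\<exists>n::int. s = (l + complex_of_real (Iint c d L) + complex_of_real (Iint c a L)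
                          + 2 * complex_of_real pi * of_int n * \<i>)
                         / (2 * complex_of_real (Iint c (\<lambda>_. 1) L))"
      unfolding P_def A_def D_def by blast
  next
    assume "\<exists>n::int. s = (l + complex_of_real (Iint c d L) + complex_of_real (Iint c a L)
                          + 2 * complex_of_real pi * of_int n * \<i>)
                         / (2 * complex_of_real (Iint c (\<lambda>_. 1) L))"
    then obtain n :: int where n: "s = (l + D L + A L + 2 * complex_of_real pi * of_int n * \<i>) / (2 * P L)"
      unfolding P_def A_def D_def by blast
    define w1 where "w1 x = exp (s * P x - A x)" for x
    define w2 where "w2 x = R0 * exp (D x - s * P x)" for x
    have sol: "bvp_solution L c a d R0 RL s w1 w2"
      unfolding bvp_solution_def
    proof (intro conjI exI ballI)
      fix x assume x: "x \<in> {0..L}"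
      show "(w1 has_vector_derivative (s * complex_of_real (1 / c x) - complex_of_real (a x / c x)) * w1 x) (at x within {0..L})"
        unfolding w1_def by (intro vexp derivative_intros dP dA x)
      show "(w2 has_vector_derivative R0 * ((complex_of_real (d x / c x) - s * complex_of_real (1 / c x)) * exp (D x - s * P x))) (at x within {0..L})"
        unfolding w2_def by (intro vexp derivative_intros dP dD x)
      show "s * w1 x - complex_of_real (c x) * ((s * complex_of_real (1 / c x) - complex_of_real (a x / c x)) * w1 x) = complex_of_real (a x) * w1 x"
        using cne[OF x] by (simp add: field_simps)
      show "s * w2 x + complex_of_real (c x) * (R0 * ((complex_of_real (d x / c x) - s * complex_of_real (1 / c x)) * exp (D x - s * P x))) = complex_of_real (d x) * w2 x"
        using cne[OF x] by (simp add: w2_def field_simps)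
    next
      show "w2 0 = complex_of_real R0 * w1 0" by (simp add: w1_def w2_def P0)
    next
      have "2 * s * P L = l + D L + A L + 2 * complex_of_real pi * of_int n * \<i>"
        using n PL by (simp add: field_simps)
      then have "s * P L - A L = (D L - s * P L) + l + of_int (2 * n) * pi * \<i>"
        by (simp add: algebra_simps)
      then have "exp (s * P L - A L) = exp (D L - s * P L) * exp l"
        by (metis exp_add exp_eq)
      then show "w1 L = complex_of_real RL * w2 L"
        using assms(7) by (simp add: w1_def w2_def algebra_simps)
    qed
    moreover have "w1 0 \<noteq> 0" by (simp add: w1_def)
    ultimately show "\<exists>w1 w2. bvp_solution L c a d R0 RL s w1 w2 \<and> (\<exists>x\<in>{0..L}. w1 x \<noteq> 0 \<or> w2 x \<noteq> 0)"
      using L0 by blast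
  qed
qed

end
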